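(* For every positive integer $N$ there exists a full spark equal norm tight integer frame with $2N$ elements in $\mathcal{H}_2$.
   Context: $\mathcal{H}_M$ is the real $M$-dimensional Hilbert space, identified with $\mathbb{R}^M$ via a fixed orthonormal basis. An equal norm tight integer frame (ENTIF) with $N$ elements in $\mathcal{H}_M$ is an $M\times N$ integer matrix $A$ of rank $M$ with $AA^T=\lambda I_M$ for some $\lambda>0$ and all columns of the same Euclidean norm (its columns are the frame vectors). A frame of $N\ge M$ vectors in $\mathcal{H}_M$ is full spark if every subset of $M$ of its vectors is linearly independent. *)

theory Defs
  imports Main "HOL-Analysis.Analysis"
begin

text \<open>An M x N integer matrix is represented as A :: nat => nat => int,
  where A i j is the entry in row i < M, column j < N. The columns are the frame vectors.\<close>

definition rank_full_rows :: "nat \<Rightarrow> nat \<Rightarrow> (nat \<Rightarrow> nat \<Rightarrow> int) \<Rightarrow> bool" where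
  "rank_full_rows M N A \<longleftrightarrow>
     (\<forall>c :: nat \<Rightarrow> real. (\<forall>j<N. (\<Sum>i<M. c i * real_of_int (A i j)) = 0) \<longrightarrow> (\<forall>i<M. c i = 0))"

definition is_ENTIF :: "nat \<Rightarrow> nat \<Rightarrow> (nat \<Rightarrow> nat \<Rightarrow> int) \<Rightarrow> bool" where
  "is_ENTIF M N A \<longleftrightarrow>
     rank_full_rows M N A \<and>
     (\<exists>lam::real. lam > 0 \<and>
        (\<forall>i<M. \<forall>k<M. real_of_int (\<Sum>j<N. A i j * A k j) = (if i = k then lam else 0))) \<and>
     (\<exists>c::int. \<forall>j<N. (\<Sum>i<M. (A i j)^2) = c)"

definition full_spark :: "nat \<Rightarrow> nat \<Rightarrow> (nat \<Rightarrow> nat \<Rightarrow> int) \<Rightarrow> bool" where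
  "full_spark M N A \<longleftrightarrow> M \<le> N \<and>
     (\<forall>S. S \<subseteq> {..<N} \<and> card S = M \<longrightarrow>
        (\<forall>c :: nat \<Rightarrow> real. (\<forall>i<M. (\<Sum>j\<in>S. c j * real_of_int (A i j)) = 0) \<longrightarrow> (\<forall>j\<in>S. c j = 0)))"

end

theory Submission imports Defs begin

fun g :: "nat \<Rightarrow> int \<times> int" where
  "g 0 = (1, 0)"
| "g (Suc n) = (3 * fst (g n) - 4 * snd (g n), 4 * fst (g n) + 3 * snd (g n))"

lemma g_norm: "(fst (g n))^2 + (snd (g n))^2 = 25^n"
  by (induction n) (auto simp: power2_eq_square algebra_simps)

lemma g_add: "g (l + d) = (fst (g l) * fst (g d) - snd (g l) * snd (g d),
                          snd (g l) * fst (g d) + fst (g l) * snd (g d))"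
  by (induction d) (auto simp: algebra_simps)

lemma m5: "(5 * t + 3) mod 5 = (3::int)" "(5 * t + 4) mod 5 = (4::int)"
  by (simp_all add: add.commute)

lemma g_mod: "d \<ge> 1 \<Longrightarrow> fst (g d) mod 5 = 3 \<and> snd (g d) mod 5 = 4"
proof (induction d)
  case 0 then show ?case by simp
next
  case (Suc n)
  show ?case
  proof (cases "n = 0")
    case True then show ?thesis by simp
  next
    case False
    then have "fst (g n) mod 5 = 3" "snd (g n) mod 5 = 4" using Suc by auto
    then obtain q r where qr: "fst (g n) = 5 * q + 3" "snd (g n) = 5 * r + 4"
      by (metis mult.commute div_mult_mod_eq)
    have "fst (g (Suc n)) = 5 * (3 * q - 4 * r - 2) + 3" "snd (g (Suc n)) = 5 * (4 * q + 3 * r + 4) + 4"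
      using qr by simp_all
    then show ?thesis by (simp only: m5)
  qed
qed

lemma g_nz: "d \<ge> 1 \<Longrightarrow> fst (g d) \<noteq> 0 \<and> snd (g d) \<noteq> 0"
  using g_mod[of d] by auto

lemma cross_nz: "k < l \<Longrightarrow> fst (g k) * snd (g l) - snd (g k) * fst (g l) \<noteq> 0"
proof -
  assume "k < l"
  define d where "d = l - k"
  have d: "l = k + d" "d \<ge> 1" using \<open>k < l\<close> unfolding d_def by auto
  obtain a b where ab: "g k = (a, b)" by (cases "g k")
  obtain c e where ce: "g d = (c, e)" by (cases "g d")
  have n: "a^2 + b^2 = 25^k" using g_norm[of k] ab by simp
  have ne: "e \<noteq> 0" using g_nz[OF d(2)] ce by simp
  have "fst (g k) * snd (g l) - snd (g k) * fst (g l) = (a^2 + b^2) * e"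
    unfolding d(1) g_add ab ce by (simp add: power2_eq_square algebra_simps)
  also have "\<dots> = 25^k * e" using n by simp
  finally show ?thesis using ne by simp
qed

lemma dot_nz_lt: "k < l \<Longrightarrow> fst (g k) * fst (g l) + snd (g k) * snd (g l) \<noteq> 0"
proof -
  assume "k < l"
  define d where "d = l - k"
  have d: "l = k + d" "d \<ge> 1" using \<open>k < l\<close> unfolding d_def by auto
  obtain a b where ab: "g k = (a, b)" by (cases "g k")
  obtain c e where ce: "g d = (c, e)" by (cases "g d")
  have n: "a^2 + b^2 = 25^k" using g_norm[of k] ab by simp
  have ne: "c \<noteq> 0" using g_nz[OF d(2)] ce by simp
  have "fst (g k) * fst (g l) + snd (g k) * snd (g l) = (a^2 + b^2) * c"
    unfolding d(1) g_add ab ce by (simp add: power2_eq_square algebra_simps)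
  also have "\<dots> = 25^k * c" using n by simp
  finally show ?thesis using ne by simp
qed

lemma dot_nz: "fst (g k) * fst (g l) + snd (g k) * snd (g l) \<noteq> 0"
proof (cases k l rule: linorder_cases)
  case less then show ?thesis by (rule dot_nz_lt)
next
  case equal
  have "fst (g k) * fst (g k) + snd (g k) * snd (g k) = 25^k"
    using g_norm[of k] unfolding power2_eq_square .
  then show ?thesis using equal by simp
next
  case greater
  have "fst (g l) * fst (g k) + snd (g l) * snd (g k) \<noteq> 0" using dot_nz_lt[OF greater] .
  then show ?thesis by (simp add: mult.commute)
qed

lemma cross_nz': "k \<noteq> l \<Longrightarrow> fst (g k) * snd (g l) - snd (g k) * fst (g l) \<noteq> 0"
proof -
  assume "k \<noteq> l"
  then consider "k < l" | "l < k" by linarith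
  then show ?thesis
  proof cases
    case 1 then show ?thesis by (rule cross_nz)
  next
    case 2
    have "fst (g l) * snd (g k) - snd (g l) * fst (g k) \<noteq> 0" using cross_nz[OF 2] .
    then show ?thesis by (simp add: mult.commute)
  qed
qed

lemma lin2:
  fixes x y u1 v1 u2 v2 :: real
  assumes "u1 * x + v1 * y = 0" "u2 * x + v2 * y = 0" "u1 * v2 - u2 * v1 \<noteq> 0"
  shows "x = 0 \<and> y = 0"
proof -
  have "x * (u1 * v2 - u2 * v1) = v2 * (u1 * x + v1 * y) - v1 * (u2 * x + v2 * y)" by (simp add: algebra_simps)
  also have "\<dots> = 0" using assms by simp
  finally have x: "x = 0" using assms(3) by simp
  have "y * (u1 * v2 - u2 * v1) = u1 * (u2 * x + v2 * y) - u2 * (u1 * x + v1 * y)" by (simp add: algebra_simps)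
  also have "\<dots> = 0" using assms by simp
  finally have "y = 0" using assms(3) by simp
  with x show ?thesis by simp
qed

definition X :: "nat \<Rightarrow> nat \<Rightarrow> int" where "X N j = 5^(N-j) * fst (g j)"
definition Y :: "nat \<Rightarrow> nat \<Rightarrow> int" where "Y N j = 5^(N-j) * snd (g j)"
definition Am :: "nat \<Rightarrow> nat \<Rightarrow> nat \<Rightarrow> int" where
  "Am N i j = (if j < N then (if i = 0 then X N j else Y N j)
               else (if i = 0 then - Y N (j-N) else X N (j-N)))"

lemma det_lt:
  assumes "p < q" "q < 2*N"
  shows "Am N 0 p * Am N 1 q - Am N 1 p * Am N 0 q \<noteq> 0"
proof -
  have c: "X N k * Y N l - Y N k * X N l \<noteq> 0" if "k \<noteq> l" for k l
  proof -
    have "X N k * Y N l - Y N k * X N l = 5^(N-k) * 5^(N-l) * (fst (g k) * snd (g l) - snd (g k) * fst (g l))"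
      by (simp add: X_def Y_def algebra_simps)
    then show ?thesis using cross_nz'[OF that] by simp
  qed
  have d: "X N k * X N l + Y N k * Y N l \<noteq> 0" for k l
  proof -
    have "X N k * X N l + Y N k * Y N l = 5^(N-k) * 5^(N-l) * (fst (g k) * fst (g l) + snd (g k) * snd (g l))"
      by (simp add: X_def Y_def algebra_simps)
    then show ?thesis using dot_nz[of k l] by simp
  qed
  consider "q < N" | "p < N" "N \<le> q" | "N \<le> p" using assms by linarith
  then show ?thesis
  proof cases
    case 1 then show ?thesis using c[of p q] assms by (simp add: Am_def)
  next
    case 2 then show ?thesis using d[of p "q-N"] by (simp add: Am_def)
  next
    case 3
    then have "p - N \<noteq> q - N" using assms by simp
    then show ?thesis using c[of "p-N" "q-N"] 3 assms by (simp add: Am_def algebra_simps)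
  qed
qed

lemma det_ne:
  assumes "p \<noteq> q" "p < 2*N" "q < 2*N"
  shows "Am N 0 p * Am N 1 q - Am N 1 p * Am N 0 q \<noteq> 0"
proof (cases "p < q")
  case True then show ?thesis using det_lt assms by blast
next
  case False then have "q < p" using assms by simp
  then show ?thesis using det_lt[of q p N] assms by (simp add: algebra_simps)
qed

lemma col_norm: "j < 2*N \<Longrightarrow> (\<Sum>i<2. (Am N i j)^2) = 25^N"
proof -
  have e: "(X N k)^2 + (Y N k)^2 = 25^N" if "k < N" for k
  proof -
    have p: "((5::int)^m)^2 = 25^m" for m
    proof -
      have "((5::int)^m)^2 = (5^2)^m" by (simp only: power_mult[symmetric] mult.commute)
      then show ?thesis by simp
    qed
    have "(X N k)^2 + (Y N k)^2 = ((5::int)^(N-k))^2 * ((fst (g k))^2 + (snd (g k))^2)"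
      by (simp only: X_def Y_def power_mult_distrib distrib_left)
    also have "\<dots> = 25^(N-k) * ((fst (g k))^2 + (snd (g k))^2)" by (simp only: p)
    also have "\<dots> = 25^(N-k) * 25^k" by (simp add: g_norm)
    also have "\<dots> = 25^N" using that by (simp add: power_add[symmetric])
    finally show ?thesis .
  qed
  assume "j < 2*N"
  then show ?thesis using e[of j] e[of "j-N"]
    by (auto simp: Am_def numeral_2_eq_2 lessThan_Suc add.commute)
qed

theorem theorem4p2:
  fixes N :: nat
  assumes "N \<ge> 1"
  shows "\<exists>A :: nat \<Rightarrow> nat \<Rightarrow> int. is_ENTIF 2 (2 * N) A \<and> full_spark 2 (2 * N) A"
proof -
  let ?A = "Am N"
  have fs: "full_spark 2 (2 * N) ?A"
    unfolding full_spark_def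
  proof (intro conjI allI impI ballI)
    show "2 \<le> 2 * N" using assms by simp
  next
    fix S c j
    assume S: "S \<subseteq> {..<2 * N} \<and> card S = 2"
      and h: "\<forall>i<2. (\<Sum>j\<in>S. c j * real_of_int (?A i j)) = 0" and j: "j \<in> S"
    obtain p q where pq: "S = {p, q}" "p \<noteq> q" using S by (meson card_2_iff)
    have pq2: "p < 2*N" "q < 2*N" using S pq by auto
    have e0: "c p * real_of_int (?A 0 p) + c q * real_of_int (?A 0 q) = 0"
      using h[rule_format, of 0] pq by simp
    have e1: "c p * real_of_int (?A 1 p) + c q * real_of_int (?A 1 q) = 0"
      using h[rule_format, of 1] pq by simp
    have dd: "real_of_int (?A 0 p) * real_of_int (?A 1 q) - real_of_int (?A 1 p) * real_of_int (?A 0 q) \<noteq> 0"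
      using det_ne[OF pq(2) pq2] by (metis of_int_diff of_int_mult of_int_eq_0_iff)
    have "c p = 0 \<and> c q = 0"
      by (rule lin2[OF _ _ dd]) (use e0 e1 in \<open>simp_all add: mult.commute\<close>)
    then show "c j = 0" using j pq by auto
  qed
  have rk: "rank_full_rows 2 (2 * N) ?A"
  proof -
  have key: "c 0 = 0 \<and> c 1 = 0" if h: "\<forall>j<2 * N. (\<Sum>i<2. c i * real_of_int (?A i j)) = 0" for c :: "nat \<Rightarrow> real"
  proof -
    have "0 < N" using assms by simp
    have h0: "c 0 * real_of_int (?A 0 0) + c 1 * real_of_int (?A 1 0) = 0"
      using h[rule_format, of 0] assms by (simp add: numeral_2_eq_2 lessThan_Suc)
    have h1: "c 0 * real_of_int (?A 0 N) + c 1 * real_of_int (?A 1 N) = 0"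
      using h[rule_format, of N] assms by (simp add: numeral_2_eq_2 lessThan_Suc)
    have a0: "?A 0 0 = 5^N" "?A 1 0 = 0" "?A 0 N = 0" "?A 1 N = 5^N"
      using \<open>0 < N\<close> by (simp_all add: Am_def X_def Y_def)
    have a1: "?A (Suc 0) 0 = 0" "?A (Suc 0) N = 5^N" using a0 by simp_all
    have "c 0 = 0" "c 1 = 0" using h0 h1 by (simp_all add: a0 a1)
    then show ?thesis by simp
  qed
  show ?thesis unfolding rank_full_rows_def
  proof (intro allI impI)
    fix c :: "nat \<Rightarrow> real" and i :: nat
    assume "\<forall>j<2 * N. (\<Sum>i<2. c i * real_of_int (?A i j)) = 0" "i < 2"
    then have "i = 0 \<or> i = 1" "c 0 = 0 \<and> c 1 = 0" using key[of c] by auto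
    then show "c i = 0" by auto
  qed
  qed
  have en: "\<exists>c::int. \<forall>j<2 * N. (\<Sum>i<2. (?A i j)^2) = c"
  proof (rule exI[of _ "25^N"], intro allI impI)
    fix j assume "j < 2 * N"
    then show "(\<Sum>i<2. (?A i j)^2) = 25^N" by (rule col_norm)
  qed
  have tt: "\<exists>lam::real. lam > 0 \<and>
        (\<forall>i<2. \<forall>k<2. real_of_int (\<Sum>j<2 * N. ?A i j * ?A k j) = (if i = k then lam else 0))"
  proof (intro exI conjI allI impI)
    have split: "(\<Sum>j<2 * N. f j) = (\<Sum>j<N. f j) + (\<Sum>j<N. f (j + N))" for f :: "nat \<Rightarrow> int"
    proof -
      have "(\<Sum>j<2 * N. f j) = (\<Sum>j<N. f j) + (\<Sum>j\<in>{N..<2*N}. f j)"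
        using sum.atLeastLessThan_concat[of 0 N "2*N" f] by (simp add: lessThan_atLeast0)
      also have "(\<Sum>j\<in>{N..<2*N}. f j) = (\<Sum>j<N. f (j + N))"
        using sum.shift_bounds_nat_ivl[of f 0 N N] by (simp add: lessThan_atLeast0 mult_2 add.commute)
      finally show ?thesis .
    qed
    have e: "(X N k)^2 + (Y N k)^2 = 25^N" if "k < N" for k
      using col_norm[of k N] that by (simp add: Am_def numeral_2_eq_2 lessThan_Suc)
    have s00: "(\<Sum>j<2 * N. ?A 0 j * ?A 0 j) = N * 25^N"
    proof -
      have "(\<Sum>j<2 * N. ?A 0 j * ?A 0 j) = (\<Sum>j<N. (X N j)^2 + (Y N j)^2)"
        by (subst split) (simp add: Am_def sum.distrib power2_eq_square)
      also have "\<dots> = (\<Sum>j<N. 25^N)" using e by simp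
      finally show ?thesis by simp
    qed
    have s11: "(\<Sum>j<2 * N. ?A 1 j * ?A 1 j) = N * 25^N"
    proof -
      have "(\<Sum>j<2 * N. ?A 1 j * ?A 1 j) = (\<Sum>j<N. (X N j)^2 + (Y N j)^2)"
        by (subst split) (simp add: Am_def sum.distrib power2_eq_square add.commute)
      also have "\<dots> = (\<Sum>j<N. 25^N)" using e by simp
      finally show ?thesis by simp
    qed
    have s01: "(\<Sum>j<2 * N. ?A 0 j * ?A 1 j) = 0"
      by (subst split) (simp add: Am_def sum.distrib[symmetric] algebra_simps)
    have s10: "(\<Sum>j<2 * N. ?A 1 j * ?A 0 j) = 0"
      using s01 by (simp add: mult.commute)
    show "(0::real) < real N * 25^N" using assms by simp
    fix i k :: nat assume "i < 2" "k < 2"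
    then have "i \<in> {0,1}" "k \<in> {0,1}" by auto
    then show "real_of_int (\<Sum>j<2 * N. ?A i j * ?A k j) = (if i = k then real N * 25^N else 0)"
    proof -
      have r00: "real_of_int (\<Sum>j<2 * N. ?A 0 j * ?A 0 j) = real N * 25^N" unfolding s00 by simp
      have r11: "real_of_int (\<Sum>j<2 * N. ?A 1 j * ?A 1 j) = real N * 25^N" unfolding s11 by simp
      have r01: "real_of_int (\<Sum>j<2 * N. ?A 0 j * ?A 1 j) = 0" unfolding s01 by simp
      have r10: "real_of_int (\<Sum>j<2 * N. ?A 1 j * ?A 0 j) = 0" unfolding s10 by simp
      show ?thesis using \<open>i \<in> {0,1}\<close> \<open>k \<in> {0,1}\<close> r00 r11 r01 r10
        by (auto simp del: of_int_sum of_int_mult)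
    qed
  qed
show ?thesis unfolding is_ENTIF_def using fs rk en tt by blast
qed

end
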